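(* Let $S\subseteq\mathbb{R}^+\cup\{0\}$ with $S\neq\emptyset$, and let $\mathbf{P}=(X,P)$ be a finite poset belonging to $C(S)$. (1) If $\mathbf{P}$ has a twin-free $S$-representation, then $\mathbf{P}$ has a distinguishing $S$-representation. (2) If $0\notin S$, then $\mathbf{P}$ has a distinguishing $S$-representation.
   Context: An interval representation of a poset $(X,P)$ assigns to each $x\in X$ a closed real interval $[l_x,r_x]$ (with $l_x\le r_x$; length $r_x-l_x$, possibly $0$) such that for all $x,y\in X$: $x<y$ in $P$ if and only if $r_x<l_y$. For $S\subseteq\mathbb{R}^+\cup\{0\}$, an $S$-representation is an interval representation in which every interval length lies in $S$, and $C(S)$ is the class of posets having an $S$-representation. A representation is twin-free if no two distinct elements of $X$ are assigned the same interval. A representation is distinguishing if every real number occurs at most once as an endpoint of an interval of the representation, i.e. no two intervals share an endpoint. *)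

theory Defs
  imports Main "HOL-Library.Product_Plus" Complex_Main
begin

definition strict_poset :: "'a set \<Rightarrow> ('a \<Rightarrow> 'a \<Rightarrow> bool) \<Rightarrow> bool" where
  "strict_poset X P \<longleftrightarrow>
     (\<forall>x\<in>X. \<not> P x x) \<and>
     (\<forall>x\<in>X. \<forall>y\<in>X. \<forall>z\<in>X. P x y \<longrightarrow> P y z \<longrightarrow> P x z)"

definition interval_rep :: "'a set \<Rightarrow> ('a \<Rightarrow> 'a \<Rightarrow> bool) \<Rightarrow> ('a \<Rightarrow> real) \<Rightarrow> ('a \<Rightarrow> real) \<Rightarrow> bool" where
  "interval_rep X P l r \<longleftrightarrow>
     (\<forall>x\<in>X. l x \<le> r x) \<and> (\<forall>x\<in>X. \<forall>y\<in>X. P x y \<longleftrightarrow> r x < l y)"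

definition S_rep :: "real set \<Rightarrow> 'a set \<Rightarrow> ('a \<Rightarrow> 'a \<Rightarrow> bool) \<Rightarrow> ('a \<Rightarrow> real) \<Rightarrow> ('a \<Rightarrow> real) \<Rightarrow> bool" where
  "S_rep S X P l r \<longleftrightarrow> interval_rep X P l r \<and> (\<forall>x\<in>X. r x - l x \<in> S)"

definition in_C :: "real set \<Rightarrow> 'a set \<Rightarrow> ('a \<Rightarrow> 'a \<Rightarrow> bool) \<Rightarrow> bool" where
  "in_C S X P \<longleftrightarrow> (\<exists>l r. S_rep S X P l r)"

definition twin_free :: "'a set \<Rightarrow> ('a \<Rightarrow> real) \<Rightarrow> ('a \<Rightarrow> real) \<Rightarrow> bool" where
  "twin_free X l r \<longleftrightarrow> (\<forall>x\<in>X. \<forall>y\<in>X. x \<noteq> y \<longrightarrow> (l x, r x) \<noteq> (l y, r y))"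

definition distinguishing :: "'a set \<Rightarrow> ('a \<Rightarrow> real) \<Rightarrow> ('a \<Rightarrow> real) \<Rightarrow> bool" where
  "distinguishing X l r \<longleftrightarrow> (\<forall>x\<in>X. \<forall>y\<in>X. x \<noteq> y \<longrightarrow> {l x, r x} \<inter> {l y, r y} = {})"

end

theory Submission
  imports Defs
begin

lemma key:
  fixes a b c d e f :: real
  assumes "a < b \<or> (a = b \<and> c < d) \<or> (a = b \<and> c = d \<and> e < f)"
  shows "eventually (\<lambda>t. a + t*c + t^2*e < b + t*d + t^2*f) (at_right 0)"
proof -
  have pos: "eventually (\<lambda>t::real. 0 < t) (at_right 0)" by (rule eventually_at_right_less)
  have eq: "\<And>t. (a + t*c + t^2*e < b + t*d + t^2*f) = (0 < (b-a) + t*((d-c) + t*(f-e)))"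
    by (simp add: power2_eq_square algebra_simps)
  have q: "((\<lambda>t::real. (d-c) + t*(f-e)) \<longlongrightarrow> (d-c)) (at_right 0)"
    by (auto intro!: tendsto_eq_intros)
  have p: "((\<lambda>t::real. (b-a) + t*((d-c) + t*(f-e))) \<longlongrightarrow> (b-a)) (at_right 0)"
    by (auto intro!: tendsto_eq_intros)
  show ?thesis unfolding eq
    using assms
  proof (elim disjE)
    assume "a < b" then show "eventually (\<lambda>t. 0 < (b-a) + t*((d-c) + t*(f-e))) (at_right 0)"
      using order_tendstoD(1)[OF p, of 0] by simp
  next
    assume h: "a = b \<and> c < d"
    then have "eventually (\<lambda>t. 0 < (d-c) + t*(f-e)) (at_right 0)"
      using order_tendstoD(1)[OF q, of 0] by simp
    then show "eventually (\<lambda>t. 0 < (b-a) + t*((d-c) + t*(f-e))) (at_right 0)"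
      using pos by eventually_elim (use h in simp)
  next
    assume h: "a = b \<and> c = d \<and> e < f"
    show "eventually (\<lambda>t. 0 < (b-a) + t*((d-c) + t*(f-e))) (at_right 0)"
      using pos by eventually_elim (use h in simp)
  qed
qed
lemma key_ne:
  fixes a b c d e f :: real
  assumes "(a,c,e) \<noteq> (b,d,f)"
  shows "eventually (\<lambda>t. a + t*c + t^2*e \<noteq> b + t*d + t^2*f) (at_right 0)"
proof -
  have "(a < b \<or> (a = b \<and> c < d) \<or> (a = b \<and> c = d \<and> e < f)) \<or>
        (b < a \<or> (b = a \<and> d < c) \<or> (b = a \<and> d = c \<and> f < e))"
    using assms by auto
  then show ?thesis
  proof
    assume "a < b \<or> (a = b \<and> c < d) \<or> (a = b \<and> c = d \<and> e < f)"
    from key[OF this] show ?thesis by eventually_elim simp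
  next
    assume "b < a \<or> (b = a \<and> d < c) \<or> (b = a \<and> d = c \<and> f < e)"
    from key[OF this] show ?thesis by eventually_elim simp
  qed
qed

lemma main:
  assumes fin: "finite X" and rep: "S_rep S X P l r"
    and H: "\<forall>x\<in>X. \<forall>y\<in>X. x \<noteq> y \<longrightarrow> r x = l y \<longrightarrow> l x + r x < l y + r y"
  shows "\<exists>l' r'. S_rep S X P l' r' \<and> distinguishing X l' r'"
proof -
  obtain gn :: "'a \<Rightarrow> nat" and n where "gn ` X = {i. i < n}" and inj: "inj_on gn X"
    using finite_imp_inj_to_nat_seg[OF fin] by blast
  define g where "g x = real (gn x)" for x
  have ginj: "g x \<noteq> g y" if "x \<in> X" "y \<in> X" "x \<noteq> y" for x y
    using inj that unfolding g_def inj_on_def by auto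
  define ph where "ph x = - (l x + r x)" for x
  define L where "L t x = l x + t * ph x + t^2 * g x" for t x
  define R where "R t x = r x + t * ph x + t^2 * g x" for t x
  have lr: "\<forall>x\<in>X. l x \<le> r x" and rel: "\<forall>x\<in>X. \<forall>y\<in>X. P x y \<longleftrightarrow> r x < l y"
    and len: "\<forall>x\<in>X. r x - l x \<in> S"
    using rep unfolding S_rep_def interval_rep_def by auto
  define Q where "Q t xy = (case xy of (x,y) \<Rightarrow>
      (x \<noteq> y \<longrightarrow> L t x \<noteq> L t y \<and> L t x \<noteq> R t y \<and> R t x \<noteq> L t y \<and> R t x \<noteq> R t y)
      \<and> (r x < l y \<longleftrightarrow> R t x < L t y))" for t xy
  have ev: "eventually (\<lambda>t. Q t xy) (at_right 0)" if xyX: "xy \<in> X \<times> X" for xy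
  proof -
    obtain x y where xy: "xy = (x,y)" "x \<in> X" "y \<in> X" using xyX by (cases xy) auto
    have e1: "eventually (\<lambda>t. x \<noteq> y \<longrightarrow> L t x \<noteq> L t y \<and> L t x \<noteq> R t y \<and> R t x \<noteq> L t y \<and> R t x \<noteq> R t y) (at_right 0)"
    proof (cases "x = y")
      case True then show ?thesis by simp
    next
      case False
      then have gg: "g x \<noteq> g y" using ginj xy by auto
      have "eventually (\<lambda>t. L t x \<noteq> L t y) (at_right 0)"
        unfolding L_def by (rule key_ne) (use gg in auto)
      moreover have "eventually (\<lambda>t. L t x \<noteq> R t y) (at_right 0)"
        unfolding L_def R_def by (rule key_ne) (use gg in auto)
      moreover have "eventually (\<lambda>t. R t x \<noteq> L t y) (at_right 0)"
        unfolding L_def R_def by (rule key_ne) (use gg in auto)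
      moreover have "eventually (\<lambda>t. R t x \<noteq> R t y) (at_right 0)"
        unfolding R_def by (rule key_ne) (use gg in auto)
      ultimately show ?thesis by eventually_elim simp
    qed
    have e2: "eventually (\<lambda>t. r x < l y \<longleftrightarrow> R t x < L t y) (at_right 0)"
    proof (cases "x = y")
      case True
      then show ?thesis using lr xy unfolding L_def R_def by (auto intro!: always_eventually)
    next
      case False
      consider "r x < l y" | "l y < r x" | "r x = l y" by linarith
      then show ?thesis
      proof cases
        case 1
        have "eventually (\<lambda>t. R t x < L t y) (at_right 0)"
          unfolding L_def R_def by (rule key) (use 1 in auto)
        then show ?thesis by eventually_elim (use 1 in simp)
      next
        case 2
        have "eventually (\<lambda>t. L t y < R t x) (at_right 0)"
          unfolding L_def R_def by (rule key) (use 2 in auto)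
        then show ?thesis by eventually_elim (use 2 in simp)
      next
        case 3
        have "l x + r x < l y + r y" using H xy False 3 by auto
        then have "ph y < ph x" unfolding ph_def by simp
        then have "eventually (\<lambda>t. L t y < R t x) (at_right 0)"
          unfolding L_def R_def by (intro key) (use 3 in auto)
        then show ?thesis by eventually_elim (use 3 in simp)
      qed
    qed
    from e1 e2 show ?thesis unfolding Q_def xy(1) by eventually_elim simp
  qed
  have "eventually (\<lambda>t. \<forall>xy\<in>X \<times> X. Q t xy) (at_right (0::real))"
    by (rule eventually_ball_finite) (use fin ev in auto)
  then obtain t where t: "\<forall>xy\<in>X \<times> X. Q t xy"
    using eventually_happens' trivial_limit_at_right_real by blast
  have "S_rep S X P (L t) (R t)"
    unfolding S_rep_def interval_rep_def
  proof (intro conjI ballI)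
    fix x assume "x \<in> X"
    then show "L t x \<le> R t x" "R t x - L t x \<in> S" using lr len unfolding L_def R_def by auto
  next
    fix x y assume "x \<in> X" "y \<in> X"
    then show "P x y \<longleftrightarrow> R t x < L t y" using t rel unfolding Q_def by fastforce
  qed
  moreover have "distinguishing X (L t) (R t)"
    unfolding distinguishing_def
  proof (intro ballI impI)
    fix x y assume "x \<in> X" "y \<in> X" "x \<noteq> y"
    then show "{L t x, R t x} \<inter> {L t y, R t y} = {}" using t unfolding Q_def by fastforce
  qed
  ultimately show ?thesis by blast
qed

theorem theorem3p2:
  fixes S :: "real set" and X :: "'a set" and P :: "'a \<Rightarrow> 'a \<Rightarrow> bool"
  assumes "S \<subseteq> {0..}" and "S \<noteq> {}"
    and "finite X" and "strict_poset X P" and "in_C S X P"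
  shows "((\<exists>l r. S_rep S X P l r \<and> twin_free X l r) \<longrightarrow>
            (\<exists>l r. S_rep S X P l r \<and> distinguishing X l r))
       \<and> (0 \<notin> S \<longrightarrow> (\<exists>l r. S_rep S X P l r \<and> distinguishing X l r))"
proof (intro conjI impI)
  assume "\<exists>l r. S_rep S X P l r \<and> twin_free X l r"
  then obtain l r where rep: "S_rep S X P l r" and tf: "twin_free X l r" by blast
  have lr: "\<forall>x\<in>X. l x \<le> r x" using rep unfolding S_rep_def interval_rep_def by auto
  have "\<forall>x\<in>X. \<forall>y\<in>X. x \<noteq> y \<longrightarrow> r x = l y \<longrightarrow> l x + r x < l y + r y"
  proof (intro ballI impI)
    fix x y assume h: "x \<in> X" "y \<in> X" "x \<noteq> y" "r x = l y"
    have "(l x, r x) \<noteq> (l y, r y)" using tf h unfolding twin_free_def by blast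
    moreover have "l x \<le> r x" "l y \<le> r y" using lr h by auto
    ultimately show "l x + r x < l y + r y" using h(4) by (cases "l x = l y") auto
  qed
  then show "\<exists>l r. S_rep S X P l r \<and> distinguishing X l r"
    using main[OF assms(3) rep] by blast
next
  assume n0: "0 \<notin> S"
  obtain l r where rep: "S_rep S X P l r" using assms(5) unfolding in_C_def by blast
  have lr: "\<forall>x\<in>X. l x < r x"
  proof
    fix x assume "x \<in> X"
    then have "l x \<le> r x" "r x - l x \<in> S" using rep unfolding S_rep_def interval_rep_def by auto
    then show "l x < r x" using n0 by (cases "l x = r x") auto
  qed
  have "\<forall>x\<in>X. \<forall>y\<in>X. x \<noteq> y \<longrightarrow> r x = l y \<longrightarrow> l x + r x < l y + r y"
  proof (intro ballI impI)
    fix x y assume h: "x \<in> X" "y \<in> X" "x \<noteq> y" "r x = l y"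
    have "l x < r x" "l y < r y" using lr h by auto
    then show "l x + r x < l y + r y" using h(4) by linarith
  qed
  then show "\<exists>l r. S_rep S X P l r \<and> distinguishing X l r"
    using main[OF assms(3) rep] by blast
qed

end
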